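(* Let $(\mathbb S,+,\cdot)$ be an S-Field, let $s\in\mathbb S$ and $m,n\in\mathbb S_0$ with $m\neq 0$. Then $n\cdot\left(\frac{s}{m}\right)=\frac{n\cdot s}{m}$.
   Context: An S-Structure is a triple $(\mathbb S,+,\cdot)$ where $\mathbb S$ is a set and $+,\cdot$ are binary operations on $\mathbb S$ such that: $(\mathbb S,+)$ is a commutative group with identity $0$ (the inverse of $s$ is written $-s$, and $s-t:=s+(-t)$); $\mathbb S$ is closed under $\cdot$; and there exists $s\in\mathbb S$ with $0\cdot s\neq 0$ or $s\cdot 0\neq 0$. Multiplication binds tighter than addition. The structures considered come with a distinguished element of $\mathbb S$ denoted $1$. It is Commutative if $s\cdot t=t\cdot s$ for all $s,t$. For a Commutative S-Structure and $\alpha\in\mathbb S$, put $\mathbb S_\alpha=\{s\in\mathbb S:0\cdot s=s\cdot 0=\alpha\}$ and $\Lambda=\{\alpha\in\mathbb S:\mathbb S_\alpha\neq\emptyset\}$. Wheel Distributive: $s\cdot(t+r)+(s\cdot 0)=(s\cdot t)+(s\cdot r)$ for all $s,t,r\in\mathbb S$. S-Associative: for all $m,n\in\mathbb S_0$ and $s\in\mathbb S$, $m\cdot(n\cdot s)=(m\cdot n)\cdot s-([(m-1)\cdot(n-1)]\cdot(0\cdot s))$. Base: if $\mathbb S_0\neq\emptyset$ and $\alpha\in\Lambda$, $q\in\mathbb S_\alpha$ is a Base for $\mathbb S_\alpha$ if $q+\beta\in\mathbb S_\alpha$ for all $\beta\in\mathbb S_0$ and every $s\in\mathbb S_\alpha$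 equals $q+\beta$ for some $\beta\in\mathbb S_0$. Coordinated: $\mathbb S_0\neq\emptyset$ and every $\mathbb S_\alpha$ with $\alpha\in\Lambda$ has a Base. Standard Bases: a Coordinated Commutative S-Structure has Standard Bases if there is a specified element $q_0(1)\in\mathbb S_1$ which is a Base for $\mathbb S_1$, and for every $\alpha\in\Lambda$ the element $q_0(\alpha):=\alpha\cdot(q_0(1)+1)-1$ lies in $\mathbb S_\alpha$ and is a Base for $\mathbb S_\alpha$. An Essential S-Structure is an S-Structure that is Commutative, Wheel Distributive, S-Associative, has Standard Bases (in particular is Coordinated), satisfies $0,1\in\mathbb S_0$, and satisfies $\mathbb S_0=\{1\cdot x:x\in\mathbb S_0\}$. A Unity is an element $e\in\Lambda$ with $e\cdot s=s\cdot e=s$ for all $s\in\mathbb S$. Scalar Inverses: the structure has a Unity $e$ and for every $x\in\mathbb S_0$ with $x\neq 0$ there is $x^{-1}\in\mathbb S_0$ with $x\cdot x^{-1}=x^{-1}\cdot x=e$. An S-Ring is an Essential S-Structure with a Unity; an S-Field is an S-Ring with Scalar Inverses. Division By Scalars: for $s\in\mathbb S$ and $m\in\mathbb S_0$, $\frac{s}{m}$ denotes an element $q\in\mathbb S$ such that $s=m\cdot q=q\cdot m$. *)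

theory Defs
  imports Main
begin

text \<open>An S-Structure is modelled on a type 'a (the set S is the whole type, so closure
  under + and * is automatic).\<close>

definition S_structure :: "('a \<Rightarrow> 'a \<Rightarrow> 'a) \<Rightarrow> ('a \<Rightarrow> 'a \<Rightarrow> 'a) \<Rightarrow> 'a \<Rightarrow> ('a \<Rightarrow> 'a) \<Rightarrow> bool" where
  "S_structure add mul z neg \<longleftrightarrow>
     (\<forall>a b c. add (add a b) c = add a (add b c)) \<and>
     (\<forall>a b. add a b = add b a) \<and>
     (\<forall>a. add z a = a \<and> add a z = a) \<and>
     (\<forall>a. add a (neg a) = z \<and> add (neg a) a = z) \<and>
     (\<exists>s. mul z s \<noteq> z \<or> mul s z \<noteq> z)"

definition ssub :: "('a \<Rightarrow> 'a \<Rightarrow> 'a) \<Rightarrow> ('a \<Rightarrow> 'a) \<Rightarrow> 'a \<Rightarrow> 'a \<Rightarrow> 'a" where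
  "ssub add neg s t = add s (neg t)"

definition S_commutative :: "('a \<Rightarrow> 'a \<Rightarrow> 'a) \<Rightarrow> bool" where
  "S_commutative mul \<longleftrightarrow> (\<forall>s t. mul s t = mul t s)"

definition S_sub :: "('a \<Rightarrow> 'a \<Rightarrow> 'a) \<Rightarrow> 'a \<Rightarrow> 'a \<Rightarrow> 'a set" where
  "S_sub mul z \<alpha> = {s. mul z s = \<alpha> \<and> mul s z = \<alpha>}"

definition S_Lambda :: "('a \<Rightarrow> 'a \<Rightarrow> 'a) \<Rightarrow> 'a \<Rightarrow> 'a set" where
  "S_Lambda mul z = {\<alpha>. S_sub mul z \<alpha> \<noteq> {}}"

definition wheel_distributive :: "('a \<Rightarrow> 'a \<Rightarrow> 'a) \<Rightarrow> ('a \<Rightarrow> 'a \<Rightarrow> 'a) \<Rightarrow> 'a \<Rightarrow> bool" where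
  "wheel_distributive add mul z \<longleftrightarrow>
     (\<forall>s t r. add (mul s (add t r)) (mul s z) = add (mul s t) (mul s r))"

definition S_associative ::
  "('a \<Rightarrow> 'a \<Rightarrow> 'a) \<Rightarrow> ('a \<Rightarrow> 'a \<Rightarrow> 'a) \<Rightarrow> 'a \<Rightarrow> ('a \<Rightarrow> 'a) \<Rightarrow> 'a \<Rightarrow> bool" where
  "S_associative add mul z neg one \<longleftrightarrow>
     (\<forall>m \<in> S_sub mul z z. \<forall>n \<in> S_sub mul z z. \<forall>s.
        mul m (mul n s) =
          ssub add neg (mul (mul m n) s)
            (mul (mul (ssub add neg m one) (ssub add neg n one)) (mul z s)))"

definition is_base :: "('a \<Rightarrow> 'a \<Rightarrow> 'a) \<Rightarrow> ('a \<Rightarrow> 'a \<Rightarrow> 'a) \<Rightarrow> 'a \<Rightarrow> 'a \<Rightarrow> 'a \<Rightarrow> bool" where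
  "is_base add mul z \<alpha> q \<longleftrightarrow>
     S_sub mul z z \<noteq> {} \<and> \<alpha> \<in> S_Lambda mul z \<and> q \<in> S_sub mul z \<alpha> \<and>
     (\<forall>\<beta> \<in> S_sub mul z z. add q \<beta> \<in> S_sub mul z \<alpha>) \<and>
     (\<forall>s \<in> S_sub mul z \<alpha>. \<exists>\<beta> \<in> S_sub mul z z. s = add q \<beta>)"

definition coordinated :: "('a \<Rightarrow> 'a \<Rightarrow> 'a) \<Rightarrow> ('a \<Rightarrow> 'a \<Rightarrow> 'a) \<Rightarrow> 'a \<Rightarrow> bool" where
  "coordinated add mul z \<longleftrightarrow>
     S_sub mul z z \<noteq> {} \<and> (\<forall>\<alpha> \<in> S_Lambda mul z. \<exists>q. is_base add mul z \<alpha> q)"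

definition standard_bases ::
  "('a \<Rightarrow> 'a \<Rightarrow> 'a) \<Rightarrow> ('a \<Rightarrow> 'a \<Rightarrow> 'a) \<Rightarrow> 'a \<Rightarrow> ('a \<Rightarrow> 'a) \<Rightarrow> 'a \<Rightarrow> 'a \<Rightarrow> bool" where
  "standard_bases add mul z neg one q1 \<longleftrightarrow>
     coordinated add mul z \<and> S_commutative mul \<and>
     q1 \<in> S_sub mul z one \<and> is_base add mul z one q1 \<and>
     (\<forall>\<alpha> \<in> S_Lambda mul z.
        ssub add neg (mul \<alpha> (add q1 one)) one \<in> S_sub mul z \<alpha> \<and>
        is_base add mul z \<alpha> (ssub add neg (mul \<alpha> (add q1 one)) one))"

definition essential_S_structure ::
  "('a \<Rightarrow> 'a \<Rightarrow> 'a) \<Rightarrow> ('a \<Rightarrow> 'a \<Rightarrow> 'a) \<Rightarrow> 'a \<Rightarrow> ('a \<Rightarrow> 'a) \<Rightarrow> 'a \<Rightarrow> 'a \<Rightarrow> bool" where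
  "essential_S_structure add mul z neg one q1 \<longleftrightarrow>
     S_structure add mul z neg \<and> S_commutative mul \<and> wheel_distributive add mul z \<and>
     S_associative add mul z neg one \<and> standard_bases add mul z neg one q1 \<and>
     z \<in> S_sub mul z z \<and> one \<in> S_sub mul z z \<and>
     S_sub mul z z = {mul one x | x. x \<in> S_sub mul z z}"

definition is_unity :: "('a \<Rightarrow> 'a \<Rightarrow> 'a) \<Rightarrow> 'a \<Rightarrow> 'a \<Rightarrow> bool" where
  "is_unity mul z e \<longleftrightarrow> e \<in> S_Lambda mul z \<and> (\<forall>s. mul e s = s \<and> mul s e = s)"

definition scalar_inverses :: "('a \<Rightarrow> 'a \<Rightarrow> 'a) \<Rightarrow> 'a \<Rightarrow> bool" where
  "scalar_inverses mul z \<longleftrightarrow>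
     (\<exists>e. is_unity mul z e \<and>
        (\<forall>x \<in> S_sub mul z z. x \<noteq> z \<longrightarrow>
           (\<exists>y \<in> S_sub mul z z. mul x y = e \<and> mul y x = e)))"

definition S_ring ::
  "('a \<Rightarrow> 'a \<Rightarrow> 'a) \<Rightarrow> ('a \<Rightarrow> 'a \<Rightarrow> 'a) \<Rightarrow> 'a \<Rightarrow> ('a \<Rightarrow> 'a) \<Rightarrow> 'a \<Rightarrow> 'a \<Rightarrow> bool" where
  "S_ring add mul z neg one q1 \<longleftrightarrow>
     essential_S_structure add mul z neg one q1 \<and> (\<exists>e. is_unity mul z e)"

definition S_field ::
  "('a \<Rightarrow> 'a \<Rightarrow> 'a) \<Rightarrow> ('a \<Rightarrow> 'a \<Rightarrow> 'a) \<Rightarrow> 'a \<Rightarrow> ('a \<Rightarrow> 'a) \<Rightarrow> 'a \<Rightarrow> 'a \<Rightarrow> bool" where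
  "S_field add mul z neg one q1 \<longleftrightarrow>
     S_ring add mul z neg one q1 \<and> scalar_inverses mul z"

text \<open>Division by scalars: q is a value of s/m.\<close>
definition is_quot :: "('a \<Rightarrow> 'a \<Rightarrow> 'a) \<Rightarrow> 'a \<Rightarrow> 'a \<Rightarrow> 'a \<Rightarrow> bool" where
  "is_quot mul s m q \<longleftrightarrow> s = mul m q \<and> s = mul q m"

end

theory Submission
  imports Defs
begin

locale sfl =
  fixes add :: "'a \<Rightarrow> 'a \<Rightarrow> 'a" (infixl "\<oplus>" 65)
    and mul :: "'a \<Rightarrow> 'a \<Rightarrow> 'a" (infixl "\<otimes>" 70)
    and z one :: 'a and neg :: "'a \<Rightarrow> 'a"
  assumes aassoc: "(a \<oplus> b) \<oplus> c = a \<oplus> (b \<oplus> c)"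
    and acomm: "a \<oplus> b = b \<oplus> a"
    and zl: "z \<oplus> a = a"
    and negr: "a \<oplus> neg a = z"
    and mcomm: "a \<otimes> b = b \<otimes> a"
    and wd: "s \<otimes> (t \<oplus> r) \<oplus> s \<otimes> z = s \<otimes> t \<oplus> s \<otimes> r"
    and sa: "z \<otimes> m = z \<Longrightarrow> z \<otimes> n = z \<Longrightarrow>
       m \<otimes> (n \<otimes> s) = (m \<otimes> n) \<otimes> s \<oplus> neg (((m \<oplus> neg one) \<otimes> (n \<oplus> neg one)) \<otimes> (z \<otimes> s))"
    and zz: "z \<otimes> z = z"
    and one0: "z \<otimes> one = z"
    and nontriv: "\<exists>s. z \<otimes> s \<noteq> z"
    and unity: "\<exists>e. \<forall>s. e \<otimes> s = s"
    and inv: "z \<otimes> x = z \<Longrightarrow> x \<noteq> z \<Longrightarrow> \<exists>y. z \<otimes> y = z \<and> x \<otimes> y = (SOME e. \<forall>s. e \<otimes> s = s)"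
begin

lemma zr: "a \<oplus> z = a" using zl acomm by metis
lemma acl: "a \<oplus> (b \<oplus> c) = b \<oplus> (a \<oplus> c)" using aassoc acomm by metis
lemma canc: "a \<oplus> b = a \<oplus> c \<Longrightarrow> b = c"
  by (metis aassoc acomm negr zl)
lemma negu: "a \<oplus> b = z \<Longrightarrow> b = neg a"
  by (metis canc negr)
lemma negneg: "neg (neg a) = a" by (metis acomm negr negu)
lemma negz: "neg z = z" by (metis negr zl)
lemma negadd: "neg (a \<oplus> b) = neg a \<oplus> neg b"
  by (metis aassoc acl negr negu zr)
lemma subz: "a \<oplus> neg b = z \<Longrightarrow> a = b" by (metis negneg negu acomm)
lemma eqsub: "a = b \<oplus> neg c \<Longrightarrow> a \<oplus> c = b"
  by (metis aassoc acomm negr zr)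

lemma fadd: "z \<otimes> (a \<oplus> b) = z \<otimes> a \<oplus> z \<otimes> b"
  using wd[of z a b] zz zr by metis

lemma s0add: "z \<otimes> x = z \<Longrightarrow> x \<otimes> (a \<oplus> b) = x \<otimes> a \<oplus> x \<otimes> b"
  using wd[of x a b] mcomm zr by metis

lemma s0neg: "z \<otimes> x = z \<Longrightarrow> x \<otimes> (neg a) = neg (x \<otimes> a)"
  using s0add[of x a "neg a"] negr mcomm by (metis negu)

lemma fneg: "z \<otimes> (neg a) = neg (z \<otimes> a)" using s0neg zz by blast

lemma S0add: "z \<otimes> x = z \<Longrightarrow> z \<otimes> y = z \<Longrightarrow> z \<otimes> (x \<oplus> y) = z"
  using fadd zr by metis
lemma S0neg: "z \<otimes> x = z \<Longrightarrow> z \<otimes> (neg x) = z"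
  using fneg negz by metis

lemma S0mul: assumes x: "z \<otimes> x = z" and y: "z \<otimes> y = z" shows "z \<otimes> (x \<otimes> y) = z"
proof -
  define K where "K = (z \<oplus> neg one) \<otimes> (x \<oplus> neg one)"
  have g: "z \<otimes> (x \<otimes> w) = neg (K \<otimes> z)" if w: "z \<otimes> w = z" for w
  proof -
    have "(z \<otimes> x) \<otimes> w = z" using x w by simp
    then show ?thesis using sa[OF zz x, of w] w K_def zl by simp
  qed
  have "z \<otimes> (x \<otimes> z) = z" using x mcomm zz by metis
  then show ?thesis using g[OF y] g[OF zz] by simp
qed

definition "ee = (SOME e. \<forall>s. e \<otimes> s = s)"

lemma ee: "ee \<otimes> s = s" unfolding ee_def using someI_ex[OF unity] by blast

lemma ee0: "z \<otimes> ee = z" using ee mcomm by metis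

lemma S0sub1: "z \<otimes> x = z \<Longrightarrow> z \<otimes> (x \<oplus> neg one) = z"
  using S0add S0neg one0 by blast

lemma ee_one: "ee = one"
proof (rule ccontr)
  assume ne: "ee \<noteq> one"
  have d0: "z \<otimes> (ee \<oplus> neg one) = z" using S0sub1 ee0 by blast
  have dnz: "ee \<oplus> neg one \<noteq> z" using ne subz by blast
  obtain u where u0: "z \<otimes> u = z" and u: "(ee \<oplus> neg one) \<otimes> u = ee"
    using inv[OF d0 dnz] unfolding ee_def by blast
  define n where "n = u \<oplus> one"
  have n0: "z \<otimes> n = z" unfolding n_def using S0add u0 one0 by blast
  have nm: "n \<oplus> neg one = u" unfolding n_def by (simp add: aassoc negr zr)
  have "z \<otimes> s = z" for s
  proof -
    have "ee \<otimes> (n \<otimes> s) = (ee \<otimes> n) \<otimes> s \<oplus> neg (ee \<otimes> (z \<otimes> s))"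
      using sa[OF ee0 n0, of s] nm u by simp
    then have "n \<otimes> s = n \<otimes> s \<oplus> neg (z \<otimes> s)" by (simp add: ee)
    then have "neg (z \<otimes> s) = z" by (metis canc zr)
    then show ?thesis by (metis negneg negz)
  qed
  then show False using nontriv by blast
qed

lemma onel: "one \<otimes> s = s" using ee ee_one by simp

lemma ff: "z \<otimes> (z \<otimes> t) = z"
proof -
  have S0m1: "z \<otimes> neg one = z" using S0neg one0 by blast
  have a: "z \<oplus> neg one = neg one" by (simp add: zl)
  have b: "neg one \<otimes> neg one = one"
    using s0neg[OF S0m1, of one] mcomm onel negneg by metis
  show ?thesis using sa[OF zz zz, of t] a b by (simp add: zz onel negr)
qed

lemma rdist: "z \<otimes> x = z \<Longrightarrow> z \<otimes> y = z \<Longrightarrow> z \<otimes> T = z \<Longrightarrow> (x \<oplus> y) \<otimes> T = x \<otimes> T \<oplus> y \<otimes> T"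
  using wd[of T x y] mcomm zr by metis

lemma rneg: "z \<otimes> k = z \<Longrightarrow> z \<otimes> T = z \<Longrightarrow> (neg k) \<otimes> T = neg (k \<otimes> T)"
  using rdist[of k "neg k" T] S0neg negr negu by metis

lemma fmul: assumes k: "z \<otimes> k = z" shows "z \<otimes> (k \<otimes> t) = k \<otimes> (z \<otimes> t)"
proof -
  define T where "T = z \<otimes> t"
  have T0: "z \<otimes> T = z" unfolding T_def by (rule ff)
  have S0m1: "z \<otimes> neg one = z" using S0neg one0 by blast
  have X: "neg one \<otimes> (k \<oplus> neg one) = neg k \<oplus> one"
    using s0neg[OF S0sub1[OF k], of one] mcomm onel negadd negneg by metis
  have XT: "(neg k \<oplus> one) \<otimes> T = neg (k \<otimes> T) \<oplus> T"
    using rdist[OF S0neg[OF k] one0 T0] rneg[OF k T0] onel by simp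
  have "z \<otimes> (k \<otimes> t) = T \<oplus> neg (neg (k \<otimes> T) \<oplus> T)"
    using sa[OF zz k, of t] X XT by (simp add: zl k T_def)
  also have "\<dots> = k \<otimes> T" by (metis negadd negneg aassoc acomm negr zl)
  finally show ?thesis unfolding T_def .
qed

lemma cancel0: assumes m: "z \<otimes> m = z" and mz: "m \<noteq> z" and w: "m \<otimes> w = z" shows "w = z"
proof -
  obtain a where a0: "z \<otimes> a = z" and am: "m \<otimes> a = one"
    using inv[OF m mz] ee_one unfolding ee_def by auto
  define c where "c = (a \<oplus> neg one) \<otimes> (m \<oplus> neg one)"
  have c0: "z \<otimes> c = z" unfolding c_def using S0mul S0sub1 a0 m by blast
  have "a \<otimes> (m \<otimes> w) = z" using w a0 mcomm by metis
  then have "z = w \<oplus> neg (c \<otimes> (z \<otimes> w))"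
    using sa[OF a0 m, of w] am mcomm onel c_def by metis
  then have wc: "w = c \<otimes> (z \<otimes> w)" by (metis subz)
  have "z \<otimes> w = c \<otimes> (z \<otimes> (z \<otimes> w))" using fmul[OF c0, of "z \<otimes> w"] wc by metis
  then have "z \<otimes> w = z" using ff c0 mcomm by metis
  then show ?thesis using wc c0 mcomm by metis
qed

lemma cancel: assumes m: "z \<otimes> m = z" and mz: "m \<noteq> z" and e: "m \<otimes> x = m \<otimes> y" shows "x = y"
proof -
  have "m \<otimes> (x \<oplus> neg y) = m \<otimes> x \<oplus> neg (m \<otimes> y)" using s0add[OF m] s0neg[OF m] by simp
  then have "m \<otimes> (x \<oplus> neg y) = z" using e negr by simp
  then show ?thesis using cancel0[OF m mz] subz by blast
qed

lemma main: assumes m: "z \<otimes> m = z" and n: "z \<otimes> n = z" and mz: "m \<noteq> z"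
  and q: "s = m \<otimes> q" and r: "n \<otimes> s = m \<otimes> r" shows "n \<otimes> q = r"
proof -
  have "n \<otimes> (m \<otimes> q) = m \<otimes> (n \<otimes> q)"
    using sa[OF n m, of q] sa[OF m n, of q] mcomm by metis
  then show ?thesis using cancel[OF m mz] q r by metis
qed

end

theorem proposition4p1p5:
  fixes add mul :: "'a \<Rightarrow> 'a \<Rightarrow> 'a" and z one q1 :: 'a and neg :: "'a \<Rightarrow> 'a"
    and s m n q r :: 'a
  assumes "S_field add mul z neg one q1"
    and "m \<in> S_sub mul z z" and "n \<in> S_sub mul z z" and "m \<noteq> z"
    and "is_quot mul s m q"
    and "is_quot mul (mul n s) m r"
  shows "mul n q = r"
proof -
  have F: "S_structure add mul z neg" "S_commutative mul" "wheel_distributive add mul z"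
    "S_associative add mul z neg one" "z \<in> S_sub mul z z" "one \<in> S_sub mul z z"
    "\<exists>e. is_unity mul z e" "scalar_inverses mul z"
    using assms(1) unfolding S_field_def S_ring_def essential_S_structure_def by auto
  have C: "mul a b = mul b a" for a b using F(2) unfolding S_commutative_def by blast
  have S0: "x \<in> S_sub mul z z \<longleftrightarrow> mul z x = z" for x
    unfolding S_sub_def using C by auto
  obtain e where e: "\<forall>s. mul e s = s"
    using F(7) unfolding is_unity_def by blast
  have someq: "(SOME e. \<forall>s. mul e s = s) = e'" if "\<forall>s. mul e' s = s" for e'
  proof -
    have "\<forall>s. mul (SOME e. \<forall>s. mul e s = s) s = s" using someI_ex[of "\<lambda>e. \<forall>s. mul e s = s"] e by blast
    then have "mul (SOME e. \<forall>s. mul e s = s) e' = e'" by blast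
    moreover have "mul e' (SOME e. \<forall>s. mul e s = s) = (SOME e. \<forall>s. mul e s = s)" using that by blast
    ultimately show ?thesis using C by metis
  qed
  interpret sfl add mul z one neg
  proof
    show "\<And>a b c. add (add a b) c = add a (add b c)"
      "\<And>a b. add a b = add b a" "\<And>a. add z a = a" "\<And>a. add a (neg a) = z"
      using F(1) unfolding S_structure_def by auto
    show "\<And>a b. mul a b = mul b a" by (rule C)
    show "\<And>s t r. add (mul s (add t r)) (mul s z) = add (mul s t) (mul s r)"
      using F(3) unfolding wheel_distributive_def by blast
    show "\<And>m n s. mul z m = z \<Longrightarrow> mul z n = z \<Longrightarrow> mul m (mul n s) =
       add (mul (mul m n) s) (neg (mul (mul (add m (neg one)) (add n (neg one))) (mul z s)))"
      using F(4) S0 unfolding S_associative_def ssub_def by blast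
    show "mul z z = z" "mul z one = z" using F(5,6) S0 by auto
    show "\<exists>s. mul z s \<noteq> z" using F(1) C unfolding S_structure_def by metis
    show "\<exists>e. \<forall>s. mul e s = s" using e by blast
    show "\<And>x. mul z x = z \<Longrightarrow> x \<noteq> z \<Longrightarrow> \<exists>y. mul z y = z \<and> mul x y = (SOME e. \<forall>s. mul e s = s)"
    proof -
      fix x assume x: "mul z x = z" "x \<noteq> z"
      obtain e' where e': "is_unity mul z e'" and I: "\<forall>x \<in> S_sub mul z z. x \<noteq> z \<longrightarrow>
           (\<exists>y \<in> S_sub mul z z. mul x y = e' \<and> mul y x = e')"
        using F(8) unfolding scalar_inverses_def by blast
      have "(SOME e. \<forall>s. mul e s = s) = e'" using e' someq unfolding is_unity_def by blast
      then show "\<exists>y. mul z y = z \<and> mul x y = (SOME e. \<forall>s. mul e s = s)"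
        using I x(2) S0[of x] x(1) S0 by blast
    qed
  qed
  have m0: "mul z m = z" and n0: "mul z n = z" using assms(2,3) S0 by auto
  show ?thesis
    using main[OF m0 n0 assms(4), of s q r] assms(5,6) unfolding is_quot_def by auto
qed

end
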